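(* Consider the ride-hailing model in the context, and let $\hat{\bm x}^A$ be an AV-first strategy, with residual demand $\hat b^C_i=b_i-\sum_j\hat x^A_{ji}$. The AV-first policy is optimal, i.e. $\sum_{i,\alpha}r^A_{i\alpha}\hat x^A_{i\alpha}+\pi(\hat{\bm b}^C)$ equals the optimal value of $\mathcal{OPT}$, if either: (i) the residual demand is fully served by CVs in the CV equilibrium, i.e. an optimal solution $\hat{\bm x}^C$ of $\mathcal{CV}(\hat{\bm b}^C)$ satisfies $\sum_j\hat x^C_{ji}=\hat b^C_i$ for all $i$; or (ii) there exists $\bm x^A\in\mathbb R^{L\times L}_{\ge0}$ satisfying flow balance and $\sum_{i,\alpha}\tau^{dr}_{i\alpha}x^A_{i\alpha}\le M$ with $\sum_j x^A_{ji}=b_i$ for all $i$.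
   Context: Model. There are $L$ regions $\{1,\dots,L\}$. For regions $i,j$, $b_{ij}\ge0$ is the customer rate from $i$ to $j$; $b_i=\sum_j b_{ij}$ (assumed $>0$), $q_{ij}=b_{ij}/b_i$. Travel times satisfy $t_{ij}>0$ for $i\ne j$, $t_{ii}=0$. Constants: $p>0$, $c\ge0$, $R\in(0,1)$, CV fleet mass $N>0$, AV fleet mass $M\ge0$. For $i,\alpha$: $\tau^{dr}_{i\alpha}=t_{i\alpha}+\sum_j q_{\alpha j}t_{\alpha j}$, $r^A_{i\alpha}=p\sum_j q_{\alpha j}t_{\alpha j}-c\tau^{dr}_{i\alpha}$, $r^C_{i\alpha}=p(1-R)\sum_j q_{\alpha j}t_{\alpha j}-c\tau^{dr}_{i\alpha}$, $r^{C2P}_{i\alpha}=pR\sum_j q_{\alpha j}t_{\alpha j}$. A matrix $\bm x\in\mathbb R^{L\times L}_{\ge0}$ satisfies flow balance if $\sum_j(\sum_k x_{kj})q_{ji}=\sum_\alpha x_{i\alpha}$ for all $i$. $\mathcal{CV}(\bm b^C)$: maximize $N\log\sum_{i,\alpha}r^C_{i\alpha}x_{i\alpha}-\sum_{i,\alpha}\tau^{dr}_{i\alpha}x_{i\alpha}$ over $\bm x\ge0$ satisfying flow balance and $\sum_j x_{ji}\le b^C_i$ for all $i$; $\pi(\bm b^C)=\sum_{i,\alpha}r^{C2P}_{i\alpha}x_{i\alpha}$ for an optimal solution $\bm x$ (same for all optimal solutions). $\mathcal{OPT}$: maximize $\sum_{i,\alpha}r^A_{i\alpha}x^A_{i\alpha}+\pi(\bm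 b^C)$ over $\bm b^C\in\mathbb R^L_{\ge0}$, $\bm x^A\in\mathbb R^{L\times L}_{\ge0}$ subject to $\sum_j x^A_{ji}+b^C_i\le b_i$ for all $i$, flow balance for $\bm x^A$, and $\sum_{i,\alpha}\tau^{dr}_{i\alpha}x^A_{i\alpha}\le M$. AV-first policy: an AV-first strategy $\hat{\bm x}^A$ is an optimal solution of $\mathcal{OPT}$ with $\bm b^C$ fixed to $\bm 0$, i.e. it maximizes $\sum_{i,\alpha}r^A_{i\alpha}x^A_{i\alpha}$ over $\bm x^A\ge0$ with $\sum_j x^A_{ji}\le b_i$ for all $i$, flow balance, and $\sum_{i,\alpha}\tau^{dr}_{i\alpha}x^A_{i\alpha}\le M$; the remaining demand $\hat{\bm b}^C$ is then revealed to CVs, giving platform profit $\sum_{i,\alpha}r^A_{i\alpha}\hat x^A_{i\alpha}+\pi(\hat{\bm b}^C)$. *)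

theory Defs
  imports Complex_Main
begin

text \<open>Ride-hailing model. Regions form a finite type 'l; matrices are functions 'l => 'l => real.
  Parameters: b (customer rates), t (travel times), p, c, R, N, M.\<close>

definition q :: "('l::finite \<Rightarrow> 'l \<Rightarrow> real) \<Rightarrow> 'l \<Rightarrow> 'l \<Rightarrow> real" where
  "q b i j = b i j / (\<Sum>k\<in>UNIV. b i k)"

definition avg_len :: "('l::finite \<Rightarrow> 'l \<Rightarrow> real) \<Rightarrow> ('l \<Rightarrow> 'l \<Rightarrow> real) \<Rightarrow> 'l \<Rightarrow> real" where
  "avg_len b t \<alpha> = (\<Sum>j\<in>UNIV. q b \<alpha> j * t \<alpha> j)"

definition tau_dr :: "('l::finite \<Rightarrow> 'l \<Rightarrow> real) \<Rightarrow> ('l \<Rightarrow> 'l \<Rightarrow> real) \<Rightarrow> 'l \<Rightarrow> 'l \<Rightarrow> real" where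
  "tau_dr b t i \<alpha> = t i \<alpha> + avg_len b t \<alpha>"

definition rA :: "real \<Rightarrow> real \<Rightarrow> ('l::finite \<Rightarrow> 'l \<Rightarrow> real) \<Rightarrow> ('l \<Rightarrow> 'l \<Rightarrow> real) \<Rightarrow> 'l \<Rightarrow> 'l \<Rightarrow> real" where
  "rA p c b t i \<alpha> = p * avg_len b t \<alpha> - c * tau_dr b t i \<alpha>"

definition rC :: "real \<Rightarrow> real \<Rightarrow> real \<Rightarrow> ('l::finite \<Rightarrow> 'l \<Rightarrow> real) \<Rightarrow> ('l \<Rightarrow> 'l \<Rightarrow> real) \<Rightarrow> 'l \<Rightarrow> 'l \<Rightarrow> real" where
  "rC p c R b t i \<alpha> = p * (1 - R) * avg_len b t \<alpha> - c * tau_dr b t i \<alpha>"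

definition rC2P :: "real \<Rightarrow> real \<Rightarrow> ('l::finite \<Rightarrow> 'l \<Rightarrow> real) \<Rightarrow> ('l \<Rightarrow> 'l \<Rightarrow> real) \<Rightarrow> 'l \<Rightarrow> 'l \<Rightarrow> real" where
  "rC2P p R b t i \<alpha> = p * R * avg_len b t \<alpha>"

definition wsum :: "('l::finite \<Rightarrow> 'l \<Rightarrow> real) \<Rightarrow> ('l \<Rightarrow> 'l \<Rightarrow> real) \<Rightarrow> real" where
  "wsum f x = (\<Sum>i\<in>UNIV. \<Sum>\<alpha>\<in>UNIV. f i \<alpha> * x i \<alpha>)"

definition inflow :: "('l::finite \<Rightarrow> 'l \<Rightarrow> real) \<Rightarrow> 'l \<Rightarrow> real" where
  "inflow x i = (\<Sum>j\<in>UNIV. x j i)"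

definition nonneg :: "('l \<Rightarrow> 'l \<Rightarrow> real) \<Rightarrow> bool" where
  "nonneg x \<longleftrightarrow> (\<forall>i j. 0 \<le> x i j)"

definition flow_balance :: "('l::finite \<Rightarrow> 'l \<Rightarrow> real) \<Rightarrow> ('l \<Rightarrow> 'l \<Rightarrow> real) \<Rightarrow> bool" where
  "flow_balance b x \<longleftrightarrow> (\<forall>i. (\<Sum>j\<in>UNIV. (\<Sum>k\<in>UNIV. x k j) * q b j i) = (\<Sum>\<alpha>\<in>UNIV. x i \<alpha>))"

text \<open>CV problem CV(bC). The objective N log(revenue) - driving time is only defined where the
  revenue is positive (domain of log), so admissible points must have positive revenue.\<close>
definition CV_feasible :: "('l::finite \<Rightarrow> 'l \<Rightarrow> real) \<Rightarrow> ('l \<Rightarrow> real) \<Rightarrow> ('l \<Rightarrow> 'l \<Rightarrow> real) \<Rightarrow> bool" where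
  "CV_feasible b bC x \<longleftrightarrow> nonneg x \<and> flow_balance b x \<and> (\<forall>i. inflow x i \<le> bC i)"

definition CV_obj :: "real \<Rightarrow> real \<Rightarrow> real \<Rightarrow> real \<Rightarrow> ('l::finite \<Rightarrow> 'l \<Rightarrow> real) \<Rightarrow> ('l \<Rightarrow> 'l \<Rightarrow> real)
    \<Rightarrow> ('l \<Rightarrow> 'l \<Rightarrow> real) \<Rightarrow> real" where
  "CV_obj p c R N b t x = N * ln (wsum (rC p c R b t) x) - wsum (tau_dr b t) x"

definition CV_optimal :: "real \<Rightarrow> real \<Rightarrow> real \<Rightarrow> real \<Rightarrow> ('l::finite \<Rightarrow> 'l \<Rightarrow> real) \<Rightarrow> ('l \<Rightarrow> 'l \<Rightarrow> real)
    \<Rightarrow> ('l \<Rightarrow> real) \<Rightarrow> ('l \<Rightarrow> 'l \<Rightarrow> real) \<Rightarrow> bool" where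
  "CV_optimal p c R N b t bC x \<longleftrightarrow>
     CV_feasible b bC x \<and> 0 < wsum (rC p c R b t) x \<and>
     (\<forall>y. CV_feasible b bC y \<and> 0 < wsum (rC p c R b t) y \<longrightarrow>
          CV_obj p c R N b t y \<le> CV_obj p c R N b t x)"

text \<open>Platform profit from CVs: the C2P revenue at an optimal solution of CV(bC);
  convention 0 if CV(bC) has no optimal solution (no profitable CV service).\<close>
definition pi_CV :: "real \<Rightarrow> real \<Rightarrow> real \<Rightarrow> real \<Rightarrow> ('l::finite \<Rightarrow> 'l \<Rightarrow> real) \<Rightarrow> ('l \<Rightarrow> 'l \<Rightarrow> real)
    \<Rightarrow> ('l \<Rightarrow> real) \<Rightarrow> real" where
  "pi_CV p c R N b t bC =
     (if \<exists>x. CV_optimal p c R N b t bC x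
      then wsum (rC2P p R b t) (SOME x. CV_optimal p c R N b t bC x) else 0)"

definition OPT_feasible :: "real \<Rightarrow> ('l::finite \<Rightarrow> 'l \<Rightarrow> real) \<Rightarrow> ('l \<Rightarrow> 'l \<Rightarrow> real)
    \<Rightarrow> ('l \<Rightarrow> real) \<Rightarrow> ('l \<Rightarrow> 'l \<Rightarrow> real) \<Rightarrow> bool" where
  "OPT_feasible M b t bC xA \<longleftrightarrow>
     (\<forall>i. 0 \<le> bC i) \<and> nonneg xA \<and> (\<forall>i. inflow xA i + bC i \<le> (\<Sum>j\<in>UNIV. b i j)) \<and>
     flow_balance b xA \<and> wsum (tau_dr b t) xA \<le> M"

definition OPT_obj :: "real \<Rightarrow> real \<Rightarrow> real \<Rightarrow> real \<Rightarrow> ('l::finite \<Rightarrow> 'l \<Rightarrow> real) \<Rightarrow> ('l \<Rightarrow> 'l \<Rightarrow> real)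
    \<Rightarrow> ('l \<Rightarrow> real) \<Rightarrow> ('l \<Rightarrow> 'l \<Rightarrow> real) \<Rightarrow> real" where
  "OPT_obj p c R N b t bC xA = wsum (rA p c b t) xA + pi_CV p c R N b t bC"

definition AV_first :: "real \<Rightarrow> real \<Rightarrow> real \<Rightarrow> ('l::finite \<Rightarrow> 'l \<Rightarrow> real) \<Rightarrow> ('l \<Rightarrow> 'l \<Rightarrow> real)
    \<Rightarrow> ('l \<Rightarrow> 'l \<Rightarrow> real) \<Rightarrow> bool" where
  "AV_first p c M b t xA \<longleftrightarrow>
     OPT_feasible M b t (\<lambda>_. 0) xA \<and>
     (\<forall>y. OPT_feasible M b t (\<lambda>_. 0) y \<longrightarrow> wsum (rA p c b t) y \<le> wsum (rA p c b t) xA)"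

end

theory Submission
  imports Defs
begin

definition Alen :: "('l::finite \<Rightarrow> 'l \<Rightarrow> real) \<Rightarrow> ('l \<Rightarrow> 'l \<Rightarrow> real) \<Rightarrow> ('l \<Rightarrow> 'l \<Rightarrow> real) \<Rightarrow> real" where
  "Alen b t x = (\<Sum>\<alpha>\<in>UNIV. avg_len b t \<alpha> * inflow x \<alpha>)"

lemma wsum_lin: "wsum f (\<lambda>i j. a * x i j + d * y i j) = a * wsum f x + d * wsum f y"
  unfolding wsum_def by (simp add: algebra_simps sum.distrib sum_distrib_left)

lemma inflow_lin: "inflow (\<lambda>i j. a * x i j + d * y i j) k = a * inflow x k + d * inflow y k"
  unfolding inflow_def by (simp add: algebra_simps sum.distrib sum_distrib_left)

lemma Alen_lin: "Alen b t (\<lambda>i j. a * x i j + d * y i j) = a * Alen b t x + d * Alen b t y"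
  unfolding Alen_def inflow_lin by (simp add: algebra_simps sum.distrib sum_distrib_left)

lemma wsum_split:
  "wsum (\<lambda>i \<alpha>. k * g \<alpha> + d * h i \<alpha>) (x::'l::finite \<Rightarrow> 'l \<Rightarrow> real)
     = k * (\<Sum>\<alpha>\<in>UNIV. g \<alpha> * inflow x \<alpha>) + d * wsum h x"
proof -
  have "wsum (\<lambda>i \<alpha>. k * g \<alpha> + d * h i \<alpha>) x
      = k * (\<Sum>i\<in>UNIV. \<Sum>\<alpha>\<in>UNIV. g \<alpha> * x i \<alpha>) + d * wsum h x"
    unfolding wsum_def by (simp add: algebra_simps sum.distrib sum_distrib_left)
  also have "(\<Sum>i\<in>UNIV. \<Sum>\<alpha>\<in>UNIV. g \<alpha> * x i \<alpha>) = (\<Sum>\<alpha>\<in>UNIV. g \<alpha> * inflow x \<alpha>)"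
    unfolding inflow_def by (subst sum.swap) (simp add: sum_distrib_left)
  finally show ?thesis .
qed

lemma rA_eq: "wsum (rA p c b t) x = p * Alen b t x - c * wsum (tau_dr b t) x"
proof -
  have "rA p c b t = (\<lambda>i \<alpha>. p * avg_len b t \<alpha> + (-c) * tau_dr b t i \<alpha>)"
    by (auto simp: rA_def fun_eq_iff)
  then show ?thesis by (simp only: wsum_split Alen_def)
qed

lemma rC_eq: "wsum (rC p c R b t) x = p * (1 - R) * Alen b t x - c * wsum (tau_dr b t) x"
proof -
  have "rC p c R b t = (\<lambda>i \<alpha>. (p * (1 - R)) * avg_len b t \<alpha> + (-c) * tau_dr b t i \<alpha>)"
    by (auto simp: rC_def fun_eq_iff)
  then show ?thesis by (simp only: wsum_split Alen_def)
qed

lemma rC2P_eq: "wsum (rC2P p R b t) x = p * R * Alen b t x"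
proof -
  have "rC2P p R b t = (\<lambda>i \<alpha>. (p * R) * avg_len b t \<alpha> + 0 * tau_dr b t i \<alpha>)"
    by (auto simp: rC2P_def fun_eq_iff)
  then show ?thesis by (simp only: wsum_split Alen_def)
qed

lemma tau_eq: "wsum (tau_dr b t) x = Alen b t x + wsum t x"
proof -
  have "tau_dr b t = (\<lambda>i \<alpha>. 1 * avg_len b t \<alpha> + 1 * t i \<alpha>)"
    by (auto simp: tau_dr_def fun_eq_iff)
  then show ?thesis by (simp only: wsum_split Alen_def)
qed

lemma fb_lin:
  assumes "flow_balance b x" "flow_balance b y"
  shows "flow_balance b (\<lambda>i j. a * x i j + d * y i j)"
  using assms unfolding flow_balance_def
  by (simp add: algebra_simps sum.distrib sum_distrib_left flip: sum_distrib_left)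

lemma nonneg_lin:
  assumes "nonneg x" "nonneg y" "0 \<le> a" "0 \<le> d"
  shows "nonneg (\<lambda>i j. a * x i j + d * y i j)"
  using assms unfolding nonneg_def by (simp add: add_nonneg_nonneg)

lemma wsum_nonneg:
  assumes "\<forall>i j. 0 \<le> f i j" "nonneg x" shows "0 \<le> wsum f x"
  using assms unfolding wsum_def nonneg_def by (simp add: sum_nonneg)

lemma inflow_nonneg: "nonneg x \<Longrightarrow> 0 \<le> inflow x i"
  unfolding inflow_def nonneg_def by (simp add: sum_nonneg)

lemma Alen_mono:
  assumes "\<forall>a. 0 \<le> avg_len b t a" "\<forall>i. inflow x i \<le> inflow y i"
  shows "Alen b t x \<le> Alen b t y"
  unfolding Alen_def using assms by (intro sum_mono mult_left_mono) auto

lemma Alen_mono_fun: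
  assumes "\<forall>a. 0 \<le> avg_len b t a" "\<forall>i. inflow x i \<le> v i"
  shows "Alen b t x \<le> (\<Sum>\<alpha>\<in>UNIV. avg_len b t \<alpha> * v \<alpha>)"
  unfolding Alen_def using assms by (intro sum_mono mult_left_mono) auto

lemma Alen_nonneg:
  assumes "\<forall>a. 0 \<le> avg_len b t a" "nonneg x" shows "0 \<le> Alen b t x"
  unfolding Alen_def using assms inflow_nonneg by (intro sum_nonneg mult_nonneg_nonneg) auto

lemma ln_mid:
  assumes "0 < a" "0 < (d::real)" "a \<noteq> d"
  shows "(ln a + ln d) / 2 < ln ((a + d) / 2)"
proof -
  have "a * d < ((a + d) / 2) ^ 2"
  proof -
    have "0 < ((a - d)/2)^2" using assms by simp
    then show ?thesis by (simp add: power2_eq_square field_simps)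
  qed
  then have "ln (a * d) < ln (((a + d) / 2) ^ 2)" using assms by simp
  then show ?thesis using assms by (simp add: ln_mult ln_realpow)
qed

lemma CV_unique:
  assumes N: "0 < N" and pR: "0 < p*(1-R)"
    and o1: "CV_optimal p c R N b t bC x1" and o2: "CV_optimal p c R N b t bC x2"
  shows "Alen b t x1 = Alen b t x2"
proof -
  define m where "m = (\<lambda>i j. (1/2) * x1 i j + (1/2) * x2 i j)"
  have f1: "CV_feasible b bC x1" and r1: "0 < wsum (rC p c R b t) x1"
    and opt1: "\<And>y. CV_feasible b bC y \<Longrightarrow> 0 < wsum (rC p c R b t) y \<Longrightarrow>
          CV_obj p c R N b t y \<le> CV_obj p c R N b t x1"
    using o1 unfolding CV_optimal_def by auto
  have f2: "CV_feasible b bC x2" and r2: "0 < wsum (rC p c R b t) x2"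
    and opt2: "\<And>y. CV_feasible b bC y \<Longrightarrow> 0 < wsum (rC p c R b t) y \<Longrightarrow>
          CV_obj p c R N b t y \<le> CV_obj p c R N b t x2"
    using o2 unfolding CV_optimal_def by auto
  have fm: "CV_feasible b bC m"
  proof -
    have "nonneg m" unfolding m_def
      by (rule nonneg_lin) (use f1 f2 in \<open>auto simp: CV_feasible_def\<close>)
    moreover have "flow_balance b m" unfolding m_def
      by (rule fb_lin) (use f1 f2 in \<open>auto simp: CV_feasible_def\<close>)
    moreover have "inflow m i \<le> bC i" for i
    proof -
      have "inflow x1 i \<le> bC i" "inflow x2 i \<le> bC i" using f1 f2 by (auto simp: CV_feasible_def)
      then show ?thesis unfolding m_def inflow_lin by simp
    qed
    ultimately show ?thesis by (simp add: CV_feasible_def)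
  qed
  have Rm: "wsum (rC p c R b t) m = (wsum (rC p c R b t) x1 + wsum (rC p c R b t) x2) / 2"
    unfolding m_def wsum_lin by simp
  have Tm: "wsum (tau_dr b t) m = (wsum (tau_dr b t) x1 + wsum (tau_dr b t) x2) / 2"
    unfolding m_def wsum_lin by simp
  have rm: "0 < wsum (rC p c R b t) m" using Rm r1 r2 by simp
  have e12: "CV_obj p c R N b t x1 = CV_obj p c R N b t x2"
    using opt1[OF f2 r2] opt2[OF f1 r1] by simp
  have om: "CV_obj p c R N b t m \<le> CV_obj p c R N b t x1" using opt1[OF fm rm] .
  have req: "wsum (rC p c R b t) x1 = wsum (rC p c R b t) x2"
  proof (rule ccontr)
    assume ne: "wsum (rC p c R b t) x1 \<noteq> wsum (rC p c R b t) x2"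
    have "(ln (wsum (rC p c R b t) x1) + ln (wsum (rC p c R b t) x2)) / 2
          < ln (wsum (rC p c R b t) m)"
      using ln_mid[OF r1 r2 ne] unfolding Rm .
    then have "N * ((ln (wsum (rC p c R b t) x1) + ln (wsum (rC p c R b t) x2)) / 2)
          < N * ln (wsum (rC p c R b t) m)" using N by simp
    then have "(CV_obj p c R N b t x1 + CV_obj p c R N b t x2) / 2 < CV_obj p c R N b t m"
      unfolding CV_obj_def Tm by (simp add: field_simps)
    then show False using e12 om by simp
  qed
  have teq: "wsum (tau_dr b t) x1 = wsum (tau_dr b t) x2"
    using e12 req unfolding CV_obj_def by simp
  have "p * (1 - R) * Alen b t x1 = p * (1 - R) * Alen b t x2"
    using req teq unfolding rC_eq by simp
  then show ?thesis using pR by auto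
qed

lemma t_nonneg_aux:
  assumes "\<forall>i j. i \<noteq> j \<longrightarrow> 0 < t i j" "\<forall>i. t i i = 0"
  shows "0 \<le> (t::'a \<Rightarrow> 'a \<Rightarrow> real) i j"
  using assms by (cases "i = j") (auto intro: less_imp_le)

lemma avg_nonneg_aux:
  assumes "\<forall>i j. 0 \<le> b i j" "\<forall>i j. 0 \<le> t i j"
  shows "0 \<le> avg_len b t a"
  unfolding avg_len_def q_def using assms
  by (intro sum_nonneg mult_nonneg_nonneg divide_nonneg_nonneg sum_nonneg) auto

lemma Alen_diff:
  "(\<Sum>\<alpha>\<in>UNIV. avg_len b t \<alpha> * (v \<alpha> - inflow x \<alpha>))
     = (\<Sum>\<alpha>\<in>UNIV. avg_len b t \<alpha> * v \<alpha>) - Alen b t x"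
  unfolding Alen_def by (simp add: right_diff_distrib sum_subtractf)

lemma pi_nonneg:
  assumes "\<forall>a. 0 \<le> avg_len b t a" "0 \<le> p * R"
  shows "0 \<le> pi_CV p c R N b t bC"
proof (cases "\<exists>x. CV_optimal p c R N b t bC x")
  case True
  then have "CV_optimal p c R N b t bC (SOME x. CV_optimal p c R N b t bC x)" by (rule someI_ex)
  then have "nonneg (SOME x. CV_optimal p c R N b t bC x)"
    by (simp add: CV_optimal_def CV_feasible_def)
  then show ?thesis using True assms unfolding pi_CV_def rC2P_eq
    by (simp add: Alen_nonneg)
next
  case False then show ?thesis by (simp add: pi_CV_def)
qed

lemma pi_bound:
  assumes avg: "\<forall>a. 0 \<le> avg_len b t a" and pR: "0 \<le> p * R"
    and bC: "\<forall>i. 0 \<le> bC i" and cap: "\<forall>i. inflow xA i + bC i \<le> B i"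
  shows "pi_CV p c R N b t bC \<le> p * R * ((\<Sum>\<alpha>\<in>UNIV. avg_len b t \<alpha> * B \<alpha>) - Alen b t xA)"
proof (cases "\<exists>x. CV_optimal p c R N b t bC x")
  case True
  define x where "x = (SOME x. CV_optimal p c R N b t bC x)"
  have "CV_optimal p c R N b t bC x" unfolding x_def using True by (rule someI_ex)
  then have "\<forall>i. inflow x i \<le> bC i" by (simp add: CV_optimal_def CV_feasible_def)
  then have "\<forall>i. inflow x i \<le> B i - inflow xA i" using cap by (metis add.commute le_diff_eq order_trans)
  then have "Alen b t x \<le> (\<Sum>\<alpha>\<in>UNIV. avg_len b t \<alpha> * (B \<alpha> - inflow xA \<alpha>))"
    by (rule Alen_mono_fun[OF avg])
  then have "Alen b t x \<le> (\<Sum>\<alpha>\<in>UNIV. avg_len b t \<alpha> * B \<alpha>) - Alen b t xA"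
    unfolding Alen_diff .
  then show ?thesis using True pR unfolding pi_CV_def rC2P_eq x_def[symmetric]
    by (simp add: mult_left_mono)
next
  case False
  have "\<forall>i. inflow xA i \<le> B i" using cap bC by (metis add_increasing2 add.commute le_add_same_cancel1 order_trans add_le_cancel_left)
  then have "Alen b t xA \<le> (\<Sum>\<alpha>\<in>UNIV. avg_len b t \<alpha> * B \<alpha>)" by (rule Alen_mono_fun[OF avg])
  then show ?thesis using False pR by (simp add: pi_CV_def)
qed

lemma arith_key:
  fixes p R c a ah Ty Th tr Ar :: real
  assumes p: "0 < p" and R: "R < 1" and c: "0 \<le> c"
    and tr: "0 < tr" and D: "Ty < Th"
    and h: "tr * (p * (a - ah) + c * (Th - Ty)) + (Th - Ty) * (p * Ar - c * tr) \<le> 0"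
    and rc: "0 < p * (1 - R) * Ar - c * tr"
  shows "p * (1 - R) * a - c * Ty \<le> p * (1 - R) * ah - c * Th"
proof -
  define D where "D = Th - Ty"
  have D0: "0 < D" using D by (simp add: D_def)
  have h1: "p * tr * (a - ah) + p * D * Ar \<le> 0" using h unfolding D_def[symmetric]
    by (simp add: algebra_simps)
  have h2: "(1 - R) * (p * tr * (a - ah)) \<le> (1 - R) * (- p * D * Ar)"
    using h1 R by (intro mult_left_mono) auto
  have h3: "0 < D * (p * (1 - R) * Ar - c * tr)" using D0 rc by simp
  have "tr * (p * (1 - R) * (a - ah) + c * D) < 0"
    using h2 h3 by (simp add: algebra_simps)
  then have "p * (1 - R) * (a - ah) + c * D < 0" using tr
    by (simp add: mult_less_0_iff)
  then show ?thesis unfolding D_def by (simp add: algebra_simps)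
qed

theorem proposition6:
  fixes b t :: "'l::finite \<Rightarrow> 'l \<Rightarrow> real"
    and p c R N M :: real
    and xA_hat :: "'l \<Rightarrow> 'l \<Rightarrow> real"
  assumes b_nonneg: "\<forall>i j. 0 \<le> b i j"
    and b_pos: "\<forall>i. 0 < (\<Sum>j\<in>UNIV. b i j)"
    and t_pos: "\<forall>i j. i \<noteq> j \<longrightarrow> 0 < t i j"
    and t_diag: "\<forall>i. t i i = 0"
    and p_pos: "0 < p" and c_nonneg: "0 \<le> c"
    and R_pos: "0 < R" and R_lt1: "R < 1"
    and N_pos: "0 < N" and M_nonneg: "0 \<le> M"
    and avfirst: "AV_first p c M b t xA_hat"
    and cond: "(\<exists>xC. CV_optimal p c R N b t (\<lambda>i. (\<Sum>j\<in>UNIV. b i j) - inflow xA_hat i) xC \<and>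
                     (\<forall>i. inflow xC i = (\<Sum>j\<in>UNIV. b i j) - inflow xA_hat i))
             \<or> (\<exists>xA. nonneg xA \<and> flow_balance b xA \<and> wsum (tau_dr b t) xA \<le> M \<and>
                     (\<forall>i. inflow xA i = (\<Sum>j\<in>UNIV. b i j)))"
  shows "\<forall>bC xA. OPT_feasible M b t bC xA \<longrightarrow>
           OPT_obj p c R N b t bC xA
             \<le> wsum (rA p c b t) xA_hat + pi_CV p c R N b t (\<lambda>i. (\<Sum>j\<in>UNIV. b i j) - inflow xA_hat i)"
proof (intro allI impI)
  fix bC xA
  assume feas: "OPT_feasible M b t bC xA"
  define B where "B = (\<lambda>i. \<Sum>j\<in>UNIV. b i j)"
  define r where "r = (\<lambda>i. B i - inflow xA_hat i)"
  define Ab where "Ab = (\<Sum>\<alpha>\<in>UNIV. avg_len b t \<alpha> * B \<alpha>)"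
  have t0: "\<forall>i j. 0 \<le> t i j" using t_nonneg_aux[OF t_pos t_diag] by blast
  have avg0: "\<forall>a. 0 \<le> avg_len b t a" using avg_nonneg_aux[OF b_nonneg t0] by blast
  have pR0: "0 \<le> p * R" using p_pos R_pos by simp
  have pR1: "0 < p * (1 - R)" using p_pos R_lt1 by simp
  have avopt: "\<And>y. nonneg y \<Longrightarrow> flow_balance b y \<Longrightarrow> (\<forall>i. inflow y i \<le> B i) \<Longrightarrow>
      wsum (tau_dr b t) y \<le> M \<Longrightarrow> wsum (rA p c b t) y \<le> wsum (rA p c b t) xA_hat"
    using avfirst unfolding AV_first_def OPT_feasible_def B_def by auto
  have hfeas: "nonneg xA_hat" "flow_balance b xA_hat" "\<forall>i. inflow xA_hat i \<le> B i"
     "wsum (tau_dr b t) xA_hat \<le> M"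
    using avfirst unfolding AV_first_def OPT_feasible_def B_def by auto
  have xAf: "nonneg xA" "flow_balance b xA" "wsum (tau_dr b t) xA \<le> M"
      "\<forall>i. 0 \<le> bC i" "\<forall>i. inflow xA i + bC i \<le> B i"
    using feas unfolding OPT_feasible_def B_def by auto
  have xAcap: "\<forall>i. inflow xA i \<le> B i" using xAf(4,5) by (meson add_le_same_cancel1 order_trans le_add_same_cancel1)
  have RAeq: "\<And>x. wsum (rA p c b t) x = p * Alen b t x - c * wsum (tau_dr b t) x" by (rule rA_eq)
  have goal_form: "OPT_obj p c R N b t bC xA = wsum (rA p c b t) xA + pi_CV p c R N b t bC"
    by (simp add: OPT_obj_def)
  have rfold: "(\<lambda>i. (\<Sum>j\<in>UNIV. b i j) - inflow xA_hat i) = r" by (simp add: r_def B_def)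
  have main: "wsum (rA p c b t) xA + pi_CV p c R N b t bC
        \<le> wsum (rA p c b t) xA_hat + pi_CV p c R N b t r"
    using cond
  proof
    assume "\<exists>xC. CV_optimal p c R N b t (\<lambda>i. (\<Sum>j\<in>UNIV. b i j) - inflow xA_hat i) xC \<and>
                     (\<forall>i. inflow xC i = (\<Sum>j\<in>UNIV. b i j) - inflow xA_hat i)"
    then obtain xc where xc: "CV_optimal p c R N b t r xc" "\<forall>i. inflow xc i = r i"
      unfolding rfold by (auto simp: r_def B_def)
    have pir: "pi_CV p c R N b t r = p * R * Alen b t xc"
    proof -
      have ex: "\<exists>x. CV_optimal p c R N b t r x" using xc(1) by blast
      have "CV_optimal p c R N b t r (SOME x. CV_optimal p c R N b t r x)" using ex by (rule someI_ex)
      then have "Alen b t (SOME x. CV_optimal p c R N b t r x) = Alen b t xc"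
        using CV_unique[OF N_pos pR1 _ xc(1)] by blast
      then show ?thesis using ex unfolding pi_CV_def rC2P_eq by simp
    qed
    have Axc: "Alen b t xc = Ab - Alen b t xA_hat"
      unfolding Ab_def Alen_diff[symmetric] unfolding Alen_def using xc(2) by (simp add: r_def)
    have G: "p * (1 - R) * Alen b t xA - c * wsum (tau_dr b t) xA
          \<le> p * (1 - R) * Alen b t xA_hat - c * wsum (tau_dr b t) xA_hat"
    proof -
      define a where "a = Alen b t xA"
      define ah where "ah = Alen b t xA_hat"
      define Ty where "Ty = wsum (tau_dr b t) xA"
      define Th where "Th = wsum (tau_dr b t) xA_hat"
      define tr where "tr = wsum (tau_dr b t) xc"
      define Ar where "Ar = Alen b t xc"
      have xcf: "nonneg xc" "flow_balance b xc" and rcp: "0 < wsum (rC p c R b t) xc"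
        using xc(1) unfolding CV_optimal_def CV_feasible_def by auto
      have rc: "0 < p * (1 - R) * Ar - c * tr" using rcp unfolding rC_eq Ar_def tr_def .
      have Artr: "Ar \<le> tr" unfolding Ar_def tr_def tau_eq
        using wsum_nonneg[OF t0 xcf(1)] by simp
      have Ar0: "0 < Ar"
      proof (rule ccontr)
        assume "\<not> 0 < Ar"
        then have "p * (1 - R) * Ar \<le> 0" using pR1 by (simp add: mult_le_0_iff)
        moreover have "0 \<le> c * tr" using c_nonneg Artr
          using Alen_nonneg[OF avg0 xcf(1)] unfolding Ar_def by simp
        ultimately show False using rc by simp
      qed
      have tr0: "0 < tr" using Ar0 Artr by simp
      have RAy: "wsum (rA p c b t) xA = p * a - c * Ty" unfolding RAeq a_def Ty_def ..
      have RAh: "wsum (rA p c b t) xA_hat = p * ah - c * Th" unfolding RAeq ah_def Th_def ..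
      have RAc: "wsum (rA p c b t) xc = p * Ar - c * tr" unfolding RAeq Ar_def tr_def ..
      have opty: "p * a - c * Ty \<le> p * ah - c * Th"
        using avopt[OF xAf(1,2) xAcap xAf(3)] unfolding RAy RAh .
      show "p * (1 - R) * Alen b t xA - c * wsum (tau_dr b t) xA
          \<le> p * (1 - R) * Alen b t xA_hat - c * wsum (tau_dr b t) xA_hat"
        unfolding a_def[symmetric] ah_def[symmetric] Ty_def[symmetric] Th_def[symmetric]
      proof (cases "Th \<le> Ty")
        case True
        show "p * (1 - R) * a - c * Ty \<le> p * (1 - R) * ah - c * Th"
        proof (cases "ah \<le> a")
          case True
          then have "p * R * ah \<le> p * R * a" using pR0 by (intro mult_left_mono)
          then show ?thesis using opty by (simp add: algebra_simps)
        next
          case False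
          then have "p * (1 - R) * a \<le> p * (1 - R) * ah" using pR1 by (intro mult_left_mono) auto
          moreover have "c * Th \<le> c * Ty" using \<open>Th \<le> Ty\<close> c_nonneg by (intro mult_left_mono)
          ultimately show ?thesis by simp
        qed
      next
        case False
        then have TyTh: "Ty < Th" by simp
        define D where "D = Th - Ty"
        have D0: "0 < D" using TyTh by (simp add: D_def)
        define ta where "ta = tr / (tr + D)"
        define tb where "tb = D / (tr + D)"
        have ta0: "0 \<le> ta" and tb0: "0 \<le> tb" using tr0 D0 by (simp_all add: ta_def tb_def)
        have tab: "ta + tb = 1"
        proof -
          have "ta + tb = (tr + D) / (tr + D)" unfolding ta_def tb_def by (rule add_divide_distrib[symmetric])
          then show ?thesis using tr0 D0 by simp
        qed
        define w where "w = (\<lambda>i j. 1 * xA_hat i j + 1 * xc i j)"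
        define z where "z = (\<lambda>i j. ta * xA i j + tb * w i j)"
        have wn: "nonneg w" unfolding w_def by (rule nonneg_lin) (use hfeas xcf in auto)
        have wf: "flow_balance b w" unfolding w_def by (rule fb_lin) (use hfeas xcf in auto)
        have zn: "nonneg z" unfolding z_def by (rule nonneg_lin) (use xAf wn ta0 tb0 in auto)
        have zf: "flow_balance b z" unfolding z_def by (rule fb_lin) (use xAf wf in auto)
        have zc: "\<forall>i. inflow z i \<le> B i"
        proof
          fix i
          have wi: "inflow w i = B i" unfolding w_def inflow_lin using xc(2) by (simp add: r_def)
          have "ta * inflow xA i \<le> ta * B i" using xAcap ta0 by (simp add: mult_left_mono)
          then have "inflow z i \<le> ta * B i + tb * B i" unfolding z_def inflow_lin wi by simp
          also have "\<dots> = B i" using tab by (simp add: algebra_simps flip: distrib_right)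
          finally show "inflow z i \<le> B i" .
        qed
        have Tz: "wsum (tau_dr b t) z = Th"
        proof -
          have "wsum (tau_dr b t) z = ta * Ty + tb * (Th + tr)"
            unfolding z_def w_def wsum_lin Ty_def Th_def tr_def by simp
          also have "\<dots> = (tr * Ty + D * (Th + tr)) / (tr + D)"
            unfolding ta_def tb_def by (simp add: add_divide_distrib)
          also have "tr * Ty + D * (Th + tr) = Th * (tr + D)" unfolding D_def by (simp add: algebra_simps)
          also have "Th * (tr + D) / (tr + D) = Th" using tr0 D0 by simp
          finally show ?thesis .
        qed
        have "wsum (rA p c b t) z \<le> wsum (rA p c b t) xA_hat"
          using avopt[OF zn zf zc] Tz hfeas(4) unfolding Th_def by simp
        moreover have "wsum (rA p c b t) z = ta * (p * a - c * Ty) + tb * ((p * ah - c * Th) + (p * Ar - c * tr))"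
          unfolding z_def w_def wsum_lin RAy RAh RAc by simp
        ultimately have ineq: "ta * (p * a - c * Ty) + tb * ((p * ah - c * Th) + (p * Ar - c * tr))
            \<le> p * ah - c * Th" unfolding RAh by simp
        have mul: "(tr + D) * (ta * (p * a - c * Ty) + tb * ((p * ah - c * Th) + (p * Ar - c * tr)))
            \<le> (tr + D) * (p * ah - c * Th)"
          using ineq tr0 D0 by (intro mult_left_mono) auto
        have "tr * (p * a - c * Ty) + D * ((p * ah - c * Th) + (p * Ar - c * tr))
            \<le> (tr + D) * (p * ah - c * Th)"
        proof -
          have e1: "(tr + D) * ta = tr" and e2: "(tr + D) * tb = D"
            using tr0 D0 unfolding ta_def tb_def by simp_all
          have "(tr + D) * (ta * (p * a - c * Ty) + tb * ((p * ah - c * Th) + (p * Ar - c * tr)))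
             = ((tr + D) * ta) * (p * a - c * Ty) + ((tr + D) * tb) * ((p * ah - c * Th) + (p * Ar - c * tr))"
            by (simp add: algebra_simps)
          then show ?thesis using mul unfolding e1 e2 by simp
        qed
        then have h: "tr * (p * (a - ah) + c * (Th - Ty)) + (Th - Ty) * (p * Ar - c * tr) \<le> 0"
          unfolding D_def by (simp add: algebra_simps)
        show "p * (1 - R) * a - c * Ty \<le> p * (1 - R) * ah - c * Th"
          by (rule arith_key[OF p_pos R_lt1 c_nonneg tr0 TyTh h rc])
      qed
    qed
    have "pi_CV p c R N b t bC \<le> p * R * (Ab - Alen b t xA)"
      using pi_bound[OF avg0 pR0 xAf(4) xAf(5)] unfolding Ab_def .
    then show ?thesis
      unfolding pir Axc RAeq using G by (simp add: algebra_simps)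
  next
    assume "\<exists>xA. nonneg xA \<and> flow_balance b xA \<and> wsum (tau_dr b t) xA \<le> M \<and>
                     (\<forall>i. inflow xA i = (\<Sum>j\<in>UNIV. b i j))"
    then obtain xs where xs: "nonneg xs" "flow_balance b xs" "wsum (tau_dr b t) xs \<le> M"
       "\<forall>i. inflow xs i = B i" by (auto simp: B_def)
    have key: "\<And>z. nonneg z \<Longrightarrow> flow_balance b z \<Longrightarrow> (\<forall>i. inflow z i \<le> B i) \<Longrightarrow>
      wsum (rA p c b t) z \<le> wsum (rA p c b t) xA_hat"
    proof -
      fix z assume z: "nonneg z" "flow_balance b z" "\<forall>i. inflow z i \<le> B i"
      show "wsum (rA p c b t) z \<le> wsum (rA p c b t) xA_hat"
      proof (cases "wsum (tau_dr b t) z \<le> M")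
        case True then show ?thesis using avopt z by blast
      next
        case False
        have A: "Alen b t z \<le> Alen b t xs" using z(3) xs(4) by (intro Alen_mono[OF avg0]) auto
        have "p * Alen b t z \<le> p * Alen b t xs" using A p_pos by simp
        moreover have "c * wsum (tau_dr b t) xs \<le> c * wsum (tau_dr b t) z"
          using False xs(3) c_nonneg by (intro mult_left_mono) auto
        ultimately have "wsum (rA p c b t) z \<le> wsum (rA p c b t) xs" unfolding RAeq by simp
        also have "\<dots> \<le> wsum (rA p c b t) xA_hat" using avopt xs by simp
        finally show ?thesis .
      qed
    qed
    have pinn: "0 \<le> pi_CV p c R N b t r" by (rule pi_nonneg[OF avg0 pR0])
    show "wsum (rA p c b t) xA + pi_CV p c R N b t bC
        \<le> wsum (rA p c b t) xA_hat + pi_CV p c R N b t r"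
    proof (cases "\<exists>x. CV_optimal p c R N b t bC x")
      case True
      define xC where "xC = (SOME x. CV_optimal p c R N b t bC x)"
      have oC: "CV_optimal p c R N b t bC xC" unfolding xC_def using True by (rule someI_ex)
      have piC: "pi_CV p c R N b t bC = p * R * Alen b t xC"
        using True unfolding pi_CV_def rC2P_eq xC_def by simp
      have fC: "nonneg xC" "flow_balance b xC" "\<forall>i. inflow xC i \<le> bC i"
        and rCp: "0 < wsum (rC p c R b t) xC"
        using oC unfolding CV_optimal_def CV_feasible_def by auto
      have lt: "p * R * Alen b t xC < wsum (rA p c b t) xC"
        using rCp unfolding rC_eq RAeq by (simp add: algebra_simps)
      define z where "z = (\<lambda>i j. 1 * xA i j + 1 * xC i j)"
      have zn: "nonneg z" unfolding z_def by (rule nonneg_lin) (use xAf fC in auto)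
      have zf: "flow_balance b z" unfolding z_def by (rule fb_lin) (use xAf fC in auto)
      have zc: "\<forall>i. inflow z i \<le> B i"
      proof
        fix i
        have "inflow xC i \<le> bC i" using fC by auto
        then show "inflow z i \<le> B i" unfolding z_def inflow_lin using xAf(5) by (smt (verit))
      qed
      have "wsum (rA p c b t) z = wsum (rA p c b t) xA + wsum (rA p c b t) xC"
        unfolding z_def wsum_lin by simp
      then have "wsum (rA p c b t) xA + wsum (rA p c b t) xC \<le> wsum (rA p c b t) xA_hat"
        using key[OF zn zf zc] by simp
      then show ?thesis using piC lt pinn by simp
    next
      case False
      then have "pi_CV p c R N b t bC = 0" by (simp add: pi_CV_def)
      moreover have "wsum (rA p c b t) xA \<le> wsum (rA p c b t) xA_hat"
        using avopt xAf(1,2,3) xAcap by blast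
      ultimately show ?thesis using pinn by simp
    qed
  qed
  then show "OPT_obj p c R N b t bC xA
             \<le> wsum (rA p c b t) xA_hat + pi_CV p c R N b t (\<lambda>i. (\<Sum>j\<in>UNIV. b i j) - inflow xA_hat i)"
    unfolding goal_form rfold .
qed

end
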